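(* Let $\mathbf{A}\in\mathbb{R}^{n\times n}$ be symmetric positive definite, and let $\mathbf{A}_\ell=\mathbf{A}+\sum_{k=1}^{\ell}\mathbf{P}_k\mathbf{E}_k\mathbf{P}_k$, where each $\mathbf{E}_k\in\mathbb{R}^{n\times n}$ is symmetric and each $\mathbf{P}_k$ is an orthogonal projection matrix. Suppose $$\sum_{k=1}^{\ell}\|\mathbf{E}_k\|_2\,\|\mathbf{P}_k\mathbf{A}^{-1}\mathbf{P}_k\|_2\le\mu<1.$$ Then $\mathbf{A}_\ell$ is symmetric positive definite and the condition number satisfies $$\kappa\!\left(\mathbf{A}_\ell^{-1/2}\mathbf{A}\,\mathbf{A}_\ell^{-1/2}\right)\le\frac{1+\mu}{1-\mu}.$$
   Context: For an SPD matrix $\mathbf{X}=\mathbf{V}\mathbf{\Lambda}\mathbf{V}^T$ (eigendecomposition), $\mathbf{X}^{1/2}=\mathbf{V}\mathbf{\Lambda}^{1/2}\mathbf{V}^T$ and $\mathbf{X}^{-1/2}$ is its inverse; $\kappa$ denotes the 2-norm condition number (ratio of largest to smallest eigenvalue for an SPD matrix). *)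

theory Defs
  imports "HOL-Analysis.Analysis"
begin

text \<open>Real n x n matrices are modelled as real^'n^'n (dimension n = CARD('n)).\<close>

definition symmetric_matrix :: "real^'n^'n \<Rightarrow> bool" where
  "symmetric_matrix A \<longleftrightarrow> transpose A = A"

definition spd :: "real^'n^'n \<Rightarrow> bool" where
  "spd A \<longleftrightarrow> symmetric_matrix A \<and> (\<forall>x. x \<noteq> 0 \<longrightarrow> x \<bullet> (A *v x) > 0)"

definition orth_proj :: "real^'n^'n \<Rightarrow> bool" where
  "orth_proj P \<longleftrightarrow> transpose P = P \<and> P ** P = P"

definition norm2 :: "real^'n^'n \<Rightarrow> real" where
  "norm2 A = onorm (\<lambda>x. A *v x)"

text \<open>Principal square root of an SPD matrix: the unique SPD matrix S with S S = X
  (equivalently V Lambda^(1/2) V^T for an eigendecomposition X = V Lambda V^T).\<close>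
definition mat_sqrt :: "real^'n^'n \<Rightarrow> real^'n^'n" where
  "mat_sqrt X = (THE S. spd S \<and> S ** S = X)"

definition mat_inv_sqrt :: "real^'n^'n \<Rightarrow> real^'n^'n" where
  "mat_inv_sqrt X = matrix_inv (mat_sqrt X)"

definition cond2 :: "real^'n^'n \<Rightarrow> real" where
  "cond2 M = norm2 M * norm2 (matrix_inv M)"

end

theory Submission
  imports Defs
begin


lemma sym_dot:
  fixes A :: "real^'n^'n"
  assumes "transpose A = A"
  shows "x \<bullet> (A *v y) = (A *v x) \<bullet> y"
proof -
  have "x \<bullet> (A *v y) = (x v* A) \<bullet> y" by (simp add: dot_lmul_matrix)
  also have "x v* A = transpose A *v x"
    by (metis vector_transpose_matrix transpose_transpose)
  finally show ?thesis using assms by simp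
qed

lemma eig_exists:
  fixes A :: "real^'n^'n"
  assumes sym: "transpose A = A" and sub: "subspace V" and nz: "V \<noteq> {0}"
    and inv: "\<forall>x\<in>V. A *v x \<in> V"
  shows "\<exists>v\<in>V. norm v = 1 \<and> A *v v = (v \<bullet> (A *v v)) *\<^sub>R v"
proof -
  let ?K = "sphere 0 1 \<inter> V"
  have cK: "compact ?K" by (intro compact_Int_closed compact_sphere closed_subspace sub)
  obtain x0 where x0: "x0 \<in> V" "x0 \<noteq> 0" using nz sub subspace_0 by blast
  have "(1 / norm x0) *\<^sub>R x0 \<in> ?K" using x0 sub by (simp add: subspace_scale)
  then have neK: "?K \<noteq> {}" by blast
  have cont: "continuous_on ?K (\<lambda>x. x \<bullet> (A *v x))"
    by (intro continuous_intros linear_continuous_on matrix_vector_mul_bounded_linear)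
  obtain v where v: "v \<in> ?K" and vmax: "\<And>y. y \<in> ?K \<Longrightarrow> y \<bullet> (A *v y) \<le> v \<bullet> (A *v v)"
    using continuous_attains_sup[OF cK neK cont] by blast
  define l where "l = v \<bullet> (A *v v)"
  have vV: "v \<in> V" and nv: "norm v = 1" using v by auto
  have vv: "v \<bullet> v = 1" using nv by (simp add: dot_square_norm)
  have bound: "x \<bullet> (A *v x) \<le> l * (x \<bullet> x)" if "x \<in> V" for x
  proof (cases "x = 0")
    case True then show ?thesis by simp
  next
    case False
    let ?y = "(1 / norm x) *\<^sub>R x"
    have "?y \<in> ?K" using that False sub by (simp add: subspace_scale)
    then have "?y \<bullet> (A *v ?y) \<le> l" using vmax l_def by blast
    moreover have "?y \<bullet> (A *v ?y) = (x \<bullet> (A *v x)) / (x \<bullet> x)"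
      by (simp add: matrix_vector_mult_scaleR dot_square_norm power2_eq_square)
    moreover have "x \<bullet> x > 0" using False by simp
    ultimately have "(x \<bullet> (A *v x)) / (x \<bullet> x) \<le> l" by simp
    with \<open>x \<bullet> x > 0\<close> show ?thesis by (simp add: pos_divide_le_eq)
  qed
  define w where "w = A *v v - l *\<^sub>R v"
  have wV: "w \<in> V" unfolding w_def using inv vV sub by (simp add: subspace_diff subspace_scale)
  have vw: "v \<bullet> w = 0" unfolding w_def l_def by (simp add: inner_diff_right vv)
  have wAv: "w \<bullet> (A *v v) = w \<bullet> w"
  proof -
    have "A *v v = w + l *\<^sub>R v" by (simp add: w_def)
    then show ?thesis using vw by (simp add: inner_add_right inner_commute)
  qed
  have "w = 0"
  proof (rule ccontr)
    assume wnz: "w \<noteq> 0"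
    define c where "c = l * (w \<bullet> w) - w \<bullet> (A *v w)"
    have c0: "c \<ge> 0" using bound[OF wV] c_def by simp
    have ww: "w \<bullet> w > 0" using wnz by simp
    define t where "t = (w \<bullet> w) / (c + 1)"
    have t0: "t > 0" using ww c0 t_def by simp
    have "v + t *\<^sub>R w \<in> V" using vV wV sub by (simp add: subspace_add subspace_scale)
    from bound[OF this] have ineq:
      "(v + t *\<^sub>R w) \<bullet> (A *v (v + t *\<^sub>R w)) \<le> l * ((v + t *\<^sub>R w) \<bullet> (v + t *\<^sub>R w))" .
    have e1: "(v + t *\<^sub>R w) \<bullet> (A *v (v + t *\<^sub>R w))
        = l + 2 * t * (w \<bullet> w) + t * t * (w \<bullet> (A *v w))"
    proof -
      have "v \<bullet> (A *v w) = w \<bullet> (A *v v)" using sym_dot[OF sym, of v w] by (simp add: inner_commute)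
      then show ?thesis using wAv
        by (simp add: matrix_vector_right_distrib matrix_vector_mult_scaleR inner_add_left
            inner_add_right l_def algebra_simps)
    qed
    have e2: "(v + t *\<^sub>R w) \<bullet> (v + t *\<^sub>R w) = 1 + t * t * (w \<bullet> w)"
      using vw vv by (simp add: inner_add_left inner_add_right inner_commute algebra_simps)
    have "l + 2 * t * (w \<bullet> w) + t * t * (w \<bullet> (A *v w)) \<le> l * (1 + t * t * (w \<bullet> w))"
      using ineq unfolding e1 e2 .
    then have "2 * t * (w \<bullet> w) \<le> t * t * c"
      by (simp add: c_def algebra_simps)
    then have "2 * (w \<bullet> w) \<le> t * c" using t0 by (simp add: mult.assoc)
    moreover have "t * c < w \<bullet> w"
      using ww c0 by (simp add: t_def field_simps)
    ultimately show False using ww by simp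
  qed
  then show ?thesis using vV nv unfolding w_def l_def by (intro bexI[of _ v]) auto
qed

lemma spectral_sub:
  fixes A :: "real^'n^'n"
  assumes sym: "transpose A = A"
  shows "subspace V \<Longrightarrow> (\<forall>x\<in>V. A *v x \<in> V) \<Longrightarrow>
    \<exists>F. finite F \<and> F \<subseteq> V \<and> (\<forall>v\<in>F. norm v = 1 \<and> A *v v = (v \<bullet> (A *v v)) *\<^sub>R v)
        \<and> pairwise orthogonal F \<and> V \<subseteq> span F"
proof (induction "dim V" arbitrary: V rule: less_induct)
  case less
  show ?case
  proof (cases "V = {0}")
    case True
    then show ?thesis by (intro exI[of _ "{}"]) auto
  next
    case False
    obtain v where vV: "v \<in> V" and nv: "norm v = 1" and ev: "A *v v = (v \<bullet> (A *v v)) *\<^sub>R v"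
      using eig_exists[OF sym less.prems(1) False less.prems(2)] by blast
    have vv: "v \<bullet> v = 1" using nv by (simp add: dot_square_norm)
    define W where "W = V \<inter> {y. orthogonal v y}"
    have subW: "subspace W" unfolding W_def
      by (rule subspace_inter[OF less.prems(1) subspace_orthogonal_to_vector])
    have invW: "\<forall>x\<in>W. A *v x \<in> W"
    proof
      fix x assume x: "x \<in> W"
      have "v \<bullet> (A *v x) = (A *v v) \<bullet> x" by (rule sym_dot[OF sym])
      also have "\<dots> = 0" using x by (subst ev) (simp add: W_def orthogonal_def)
      finally show "A *v x \<in> W" using x less.prems(2) by (auto simp: W_def orthogonal_def)
    qed
    have "v \<notin> W" using vv by (simp add: W_def orthogonal_def)
    then have "W \<subset> V" using vV by (auto simp: W_def)
    moreover have "span W = W" "span V = V" using subW less.prems(1) by (simp_all add: span_eq_iff)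
    ultimately have "span W \<subset> span V" by (simp only:)
    then have "dim W < dim V" by (rule dim_psubset)
    from less.hyps[OF this subW invW] obtain F' where F': "finite F'" "F' \<subseteq> W"
      "\<forall>v\<in>F'. norm v = 1 \<and> A *v v = (v \<bullet> (A *v v)) *\<^sub>R v" "pairwise orthogonal F'" "W \<subseteq> span F'"
      by blast
    show ?thesis
    proof (intro exI[of _ "insert v F'"] conjI)
      show "finite (insert v F')" using F' by simp
      show "insert v F' \<subseteq> V" using F' vV by (auto simp: W_def)
      show "\<forall>u\<in>insert v F'. norm u = 1 \<and> A *v u = (u \<bullet> (A *v u)) *\<^sub>R u" using F' nv ev by auto
      have "\<forall>y\<in>F'. orthogonal v y \<and> orthogonal y v"
        using F'(2) unfolding W_def by (auto simp: orthogonal_def inner_commute)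
      then show "pairwise orthogonal (insert v F')"
        using F'(4) by (simp add: pairwise_insert)
      show "V \<subseteq> span (insert v F')"
      proof
        fix x assume x: "x \<in> V"
        have "x - (v \<bullet> x) *\<^sub>R v \<in> W"
          using x vV vv less.prems(1)
          by (auto simp: W_def orthogonal_def subspace_diff subspace_scale inner_diff_right)
        then have "x - (v \<bullet> x) *\<^sub>R v \<in> span (insert v F')"
          using F'(5) span_mono[of F' "insert v F'"] by blast
        moreover have "(v \<bullet> x) *\<^sub>R v \<in> span (insert v F')"
          by (intro span_mul span_base) simp
        ultimately have "x - (v \<bullet> x) *\<^sub>R v + (v \<bullet> x) *\<^sub>R v \<in> span (insert v F')"
          by (rule span_add)
        then show "x \<in> span (insert v F')" by simp
      qed
    qed
  qed
qed

lemma ortho_coeff: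
  fixes F :: "(real^'n) set"
  assumes "finite F" "pairwise orthogonal F" "\<forall>v\<in>F. norm v = 1" "u \<in> F"
  shows "u \<bullet> (\<Sum>v\<in>F. c v *\<^sub>R v) = c u"
proof -
  have "u \<bullet> (\<Sum>v\<in>F. c v *\<^sub>R v) = (\<Sum>v\<in>F. c v * (u \<bullet> v))"
    by (simp add: inner_sum_right)
  also have "\<dots> = c u * (u \<bullet> u) + (\<Sum>v\<in>F-{u}. c v * (u \<bullet> v))"
    using assms by (simp add: sum.remove)
  also have "(\<Sum>v\<in>F-{u}. c v * (u \<bullet> v)) = 0"
    using assms by (intro sum.neutral) (auto simp: pairwise_def orthogonal_def)
  also have "u \<bullet> u = 1" using assms by (simp add: dot_square_norm)
  finally show ?thesis by simp
qed

lemma spectral: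
  fixes A :: "real^'n^'n"
  assumes sym: "transpose A = A"
  obtains F where "finite F" "\<forall>v\<in>F. norm v = 1 \<and> A *v v = (v \<bullet> (A *v v)) *\<^sub>R v"
    "pairwise orthogonal F" "\<And>x. x = (\<Sum>v\<in>F. (v \<bullet> x) *\<^sub>R v)"
proof -
  obtain F where F: "finite F" "\<forall>v\<in>F. norm v = 1 \<and> A *v v = (v \<bullet> (A *v v)) *\<^sub>R v"
    "pairwise orthogonal F" "UNIV \<subseteq> span F"
    using spectral_sub[OF sym, of UNIV] subspace_UNIV by blast
  have n1: "\<forall>v\<in>F. norm v = 1" using F(2) by blast
  have exp: "x = (\<Sum>v\<in>F. (v \<bullet> x) *\<^sub>R v)" for x
  proof -
    define r where "r = x - (\<Sum>v\<in>F. (v \<bullet> x) *\<^sub>R v)"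
    have "orthogonal r y" if "y \<in> F" for y
    proof -
      have "y \<bullet> (\<Sum>v\<in>F. (v \<bullet> x) *\<^sub>R v) = y \<bullet> x"
        by (rule ortho_coeff[OF F(1) F(3) n1 that])
      then have "y \<bullet> r = 0" unfolding r_def by (simp only: inner_diff_right)
      then show ?thesis by (simp add: orthogonal_def inner_commute)
    qed
    moreover have "r \<in> span F" using F(4) by blast
    ultimately have "orthogonal r r" using orthogonal_to_span by blast
    then have "r = 0" by (simp add: orthogonal_def)
    then show ?thesis by (simp add: r_def)
  qed
  show ?thesis by (rule that[OF F(1) F(2) F(3) exp])
qed

lemma spd_sym: "spd A \<Longrightarrow> transpose A = A"
  by (simp add: spd_def symmetric_matrix_def)

lemma spd_pos: "spd A \<Longrightarrow> x \<noteq> 0 \<Longrightarrow> x \<bullet> (A *v x) > 0"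
  by (simp add: spd_def)

lemma sqrt_exists:
  fixes B :: "real^'n^'n"
  assumes "spd B"
  shows "\<exists>S. spd S \<and> S ** S = B"
proof -
  obtain F where F: "finite F" "\<forall>v\<in>F. norm v = 1 \<and> B *v v = (v \<bullet> (B *v v)) *\<^sub>R v"
    "pairwise orthogonal F" "\<And>x. x = (\<Sum>v\<in>F. (v \<bullet> x) *\<^sub>R v)"
    by (rule spectral[OF spd_sym[OF assms]]) (rule that)
  have n1: "\<forall>v\<in>F. norm v = 1" using F(2) by blast
  define lam where "lam v = v \<bullet> (B *v v)" for v
  have lampos: "lam v > 0" if "v \<in> F" for v
  proof -
    have "v \<noteq> 0" using n1 that by auto
    then show ?thesis using spd_pos[OF assms] lam_def by simp
  qed
  define s where "s v = sqrt (lam v)" for v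
  have spos: "s v > 0" if "v \<in> F" for v using lampos[OF that] s_def by simp
  have ss: "s v * s v = lam v" if "v \<in> F" for v using lampos[OF that] s_def by simp
  define S :: "real^'n^'n" where "S = (\<chi> i j. \<Sum>v\<in>F. s v * (v$i * v$j))"
  have Sx: "S *v x = (\<Sum>v\<in>F. (s v * (v \<bullet> x)) *\<^sub>R v)" for x
  proof (subst vec_eq_iff, intro allI)
    fix i
    have "(S *v x)$i = (\<Sum>j\<in>UNIV. \<Sum>v\<in>F. s v * (v$i * v$j) * x$j)"
      by (simp add: S_def matrix_vector_mult_def sum_distrib_right)
    also have "\<dots> = (\<Sum>v\<in>F. \<Sum>j\<in>UNIV. s v * (v$i * v$j) * x$j)"
      by (rule sum.swap)
    also have "\<dots> = (\<Sum>v\<in>F. (s v * (v \<bullet> x)) * v$i)"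
      by (simp add: inner_vec_def sum_distrib_left mult_ac)
    also have "\<dots> = (\<Sum>v\<in>F. (s v * (v \<bullet> x)) *\<^sub>R v)$i"
      by (simp add: sum_component)
    finally show "(S *v x)$i = (\<Sum>v\<in>F. (s v * (v \<bullet> x)) *\<^sub>R v)$i" .
  qed
  have Bx: "B *v x = (\<Sum>v\<in>F. (lam v * (v \<bullet> x)) *\<^sub>R v)" for x
  proof -
    have "B *v x = B *v (\<Sum>v\<in>F. (v \<bullet> x) *\<^sub>R v)" by (rule arg_cong[where f="(*v) B"], rule F(4))
    also have "\<dots> = (\<Sum>v\<in>F. (v \<bullet> x) *\<^sub>R (B *v v))"
      by (simp add: vec.sum matrix_vector_mult_scaleR)
    also have "\<dots> = (\<Sum>v\<in>F. (lam v * (v \<bullet> x)) *\<^sub>R v)"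
    proof (rule sum.cong[OF refl])
      fix v assume "v \<in> F"
      then have "B *v v = (v \<bullet> (B *v v)) *\<^sub>R v" using F(2) by blast
      then have "B *v v = lam v *\<^sub>R v" unfolding lam_def .
      then show "(v \<bullet> x) *\<^sub>R (B *v v) = (lam v * (v \<bullet> x)) *\<^sub>R v" by (simp add: mult.commute)
    qed
    finally show ?thesis .
  qed
  have "S ** S = B"
  proof (subst matrix_eq, intro allI)
    fix x
    have "S ** S *v x = S *v (S *v x)" by (simp add: matrix_vector_mul_assoc)
    also have "\<dots> = (\<Sum>v\<in>F. (s v * (v \<bullet> (S *v x))) *\<^sub>R v)" by (rule Sx)
    also have "\<dots> = (\<Sum>v\<in>F. (lam v * (v \<bullet> x)) *\<^sub>R v)"
    proof (rule sum.cong[OF refl])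
      fix v assume v: "v \<in> F"
      have "v \<bullet> (S *v x) = s v * (v \<bullet> x)"
        unfolding Sx by (rule ortho_coeff[OF F(1) F(3) n1 v])
      then show "(s v * (v \<bullet> (S *v x))) *\<^sub>R v = (lam v * (v \<bullet> x)) *\<^sub>R v"
        using ss[OF v] by (simp add: mult.assoc[symmetric])
    qed
    also have "\<dots> = B *v x" by (rule Bx[symmetric])
    finally show "S ** S *v x = B *v x" .
  qed
  moreover have "spd S"
    unfolding spd_def symmetric_matrix_def
  proof (intro conjI allI impI)
    show "transpose S = S"
      by (simp add: S_def transpose_def vec_eq_iff mult.commute)
    fix x :: "real^'n" assume x: "x \<noteq> 0"
    have "x \<bullet> (S *v x) = (\<Sum>v\<in>F. s v * (v \<bullet> x) * (v \<bullet> x))"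
      by (simp add: Sx inner_sum_right inner_commute)
    moreover have "\<exists>v\<in>F. v \<bullet> x \<noteq> 0"
    proof (rule ccontr)
      assume "\<not> ?thesis"
      then have "(\<Sum>v\<in>F. (v \<bullet> x) *\<^sub>R v) = 0" by simp
      then show False using trans[OF F(4)[of x]] x by blast
    qed
    then obtain u where u: "u \<in> F" "u \<bullet> x \<noteq> 0" by blast
    have "0 < (\<Sum>v\<in>F. s v * (v \<bullet> x) * (v \<bullet> x))"
    proof (rule sum_pos2[OF F(1) u(1)])
      have "0 < (u \<bullet> x) * (u \<bullet> x)" using u(2) by (simp add: zero_less_mult_iff linorder_neq_iff) blast
      then show "0 < s u * (u \<bullet> x) * (u \<bullet> x)" using spos[OF u(1)]
        by (simp add: mult.assoc)
      show "\<And>v. v \<in> F \<Longrightarrow> 0 \<le> s v * (v \<bullet> x) * (v \<bullet> x)"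
        using spos by (simp add: mult.assoc less_imp_le)
    qed
    ultimately show "0 < x \<bullet> (S *v x)" by simp
  qed
  ultimately show ?thesis by blast
qed

lemma sqrt_unique:
  fixes S T :: "real^'n^'n"
  assumes S: "spd S" and T: "spd T" and eq: "S ** S = T ** T"
  shows "S = T"
proof -
  obtain F where F: "finite F" "\<forall>v\<in>F. norm v = 1 \<and> T *v v = (v \<bullet> (T *v v)) *\<^sub>R v"
    "pairwise orthogonal F" "\<And>x. x = (\<Sum>v\<in>F. (v \<bullet> x) *\<^sub>R v)"
    by (rule spectral[OF spd_sym[OF T]]) (rule that)
  have SwTw: "S *v w = T *v w" if w: "w \<in> F" for w
  proof -
    define m where "m = w \<bullet> (T *v w)"
    have "norm w = 1" using F(2) w by blast
    then have "w \<noteq> 0" by auto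
    then have m0: "m > 0" using spd_pos[OF T] m_def by simp
    have Tw: "T *v w = m *\<^sub>R w" using F(2) w m_def by blast
    define y where "y = S *v w - m *\<^sub>R w"
    have "S *v (S *v w) = T *v (T *v w)"
      by (simp add: matrix_vector_mul_assoc eq)
    also have "\<dots> = (m * m) *\<^sub>R w" by (simp add: Tw matrix_vector_mult_scaleR)
    finally have SSw: "S *v (S *v w) = (m * m) *\<^sub>R w" .
    have Sy: "S *v y = (- m) *\<^sub>R y"
      by (simp add: y_def matrix_vector_mult_diff_distrib matrix_vector_mult_scaleR SSw algebra_simps)
    have "y = 0"
    proof (rule ccontr)
      assume "y \<noteq> 0"
      then have p1: "y \<bullet> (S *v y) > 0" and p2: "y \<bullet> y > 0" using spd_pos[OF S] by auto
      have p3: "y \<bullet> (S *v y) = - m * (y \<bullet> y)" by (simp add: Sy)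
      have "m * (y \<bullet> y) > 0" using m0 p2 by simp
      then show False using p1 p3 by simp
    qed
    then show ?thesis using Tw by (simp add: y_def)
  qed
  show ?thesis
  proof (subst matrix_eq, intro allI)
    fix x
    have "S *v x = S *v (\<Sum>v\<in>F. (v \<bullet> x) *\<^sub>R v)" by (rule arg_cong[where f="(*v) S"], rule F(4))
    also have "\<dots> = (\<Sum>v\<in>F. (v \<bullet> x) *\<^sub>R (S *v v))" by (simp add: vec.sum matrix_vector_mult_scaleR)
    also have "\<dots> = (\<Sum>v\<in>F. (v \<bullet> x) *\<^sub>R (T *v v))" using SwTw by simp
    also have "\<dots> = T *v (\<Sum>v\<in>F. (v \<bullet> x) *\<^sub>R v)" by (simp add: vec.sum matrix_vector_mult_scaleR)
    also have "\<dots> = T *v x" by (rule arg_cong[where f="(*v) T"], rule F(4)[symmetric])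
    finally show "S *v x = T *v x" .
  qed
qed

lemma mat_sqrt:
  fixes X :: "real^'n^'n"
  assumes "spd X"
  shows "spd (mat_sqrt X) \<and> mat_sqrt X ** mat_sqrt X = X"
proof -
  have "\<exists>!S. spd S \<and> S ** S = X"
    using sqrt_exists[OF assms] sqrt_unique by metis
  then show ?thesis unfolding mat_sqrt_def by (rule theI')
qed



lemma mat_inv_props:
  fixes A :: "real^'n^'n"
  assumes "invertible A"
  shows "matrix_inv A ** A = mat 1" "A ** matrix_inv A = mat 1"
proof -
  have "\<exists>A'. A ** A' = mat 1 \<and> A' ** A = mat 1" using assms by (simp add: invertible_def)
  then have "A ** matrix_inv A = mat 1 \<and> matrix_inv A ** A = mat 1"
    unfolding matrix_inv_def by (rule someI_ex)
  then show "matrix_inv A ** A = mat 1" "A ** matrix_inv A = mat 1" by auto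
qed

lemma mat_inv_vec:
  fixes A :: "real^'n^'n"
  assumes "invertible A"
  shows "matrix_inv A *v (A *v x) = x" "A *v (matrix_inv A *v x) = x"
  using mat_inv_props[OF assms] by (simp_all add: matrix_vector_mul_assoc matrix_vector_mul_lid)

lemma spd_invertible:
  fixes A :: "real^'n^'n"
  assumes "spd A" shows "invertible A"
proof -
  have "\<forall>x. A *v x = 0 \<longrightarrow> x = 0"
  proof (intro allI impI)
    fix x assume "A *v x = 0"
    then have "x \<bullet> (A *v x) = 0" by simp
    then show "x = 0" using spd_pos[OF assms, of x] by (cases "x = 0") auto
  qed
  then show ?thesis by (simp add: invertible_left_inverse matrix_left_invertible_ker)
qed

lemma inv_sym:
  fixes A :: "real^'n^'n"
  assumes s: "transpose A = A" and i: "invertible A"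
  shows "transpose (matrix_inv A) = matrix_inv A"
proof -
  have "transpose (matrix_inv A) ** A = transpose (A ** matrix_inv A)"
    using s by (simp add: matrix_transpose_mul)
  also have "\<dots> = mat 1" using mat_inv_props[OF i] by (simp add: transpose_mat)
  finally have h: "transpose (matrix_inv A) ** A = mat 1" .
  have "transpose (matrix_inv A) = transpose (matrix_inv A) ** (A ** matrix_inv A)"
    using mat_inv_props[OF i] by (simp add: matrix_mul_rid)
  also have "\<dots> = matrix_inv A" using h by (simp add: matrix_mul_assoc matrix_mul_lid)
  finally show ?thesis .
qed



lemma quad_expand:
  fixes M :: "real^'n^'n"
  assumes "transpose M = M"
  shows "(u + t *\<^sub>R z) \<bullet> (M *v (u + t *\<^sub>R z))
    = u \<bullet> (M *v u) + 2 * t * (u \<bullet> (M *v z)) + t * t * (z \<bullet> (M *v z))"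
proof -
  have "z \<bullet> (M *v u) = u \<bullet> (M *v z)"
    using sym_dot[OF assms, of z u] by (simp add: inner_commute)
  then show ?thesis
    by (simp add: matrix_vector_right_distrib matrix_vector_mult_scaleR inner_add_left
        inner_add_right algebra_simps)
qed

lemma psd_cs:
  fixes M :: "real^'n^'n"
  assumes s: "transpose M = M" and p: "\<And>x. 0 \<le> x \<bullet> (M *v x)"
  shows "(u \<bullet> (M *v z))^2 \<le> (u \<bullet> (M *v u)) * (z \<bullet> (M *v z))"
proof -
  define a where "a = u \<bullet> (M *v u)"
  define b where "b = u \<bullet> (M *v z)"
  define c where "c = z \<bullet> (M *v z)"
  have q: "0 \<le> a + 2 * t * b + t * t * c" for t
    using p[of "u + t *\<^sub>R z"] quad_expand[OF s, of u t z] a_def b_def c_def by simp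
  have a0: "0 \<le> a" "0 \<le> c" using p a_def c_def by auto
  show ?thesis
  proof (cases "c = 0")
    case True
    have "b = 0"
    proof (rule ccontr)
      assume "b \<noteq> 0"
      have "0 \<le> a + 2 * (- (a + 1) / (2 * b)) * b" using q[of "- (a + 1) / (2 * b)"] True by simp
      also have "\<dots> = -1" using \<open>b \<noteq> 0\<close> by (simp add: field_simps)
      finally show False by simp
    qed
    then show ?thesis using True a_def b_def c_def by simp
  next
    case False
    then have c0: "c > 0" using a0 by simp
    have "0 \<le> a + 2 * (- b / c) * b + (- b / c) * (- b / c) * c" by (rule q)
    also have "\<dots> = a - b * b / c" using c0 by (simp add: field_simps power2_eq_square)
    finally have "b * b / c \<le> a" by simp
    then have "b * b \<le> a * c" using c0 by (simp add: pos_divide_le_eq)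
    then show ?thesis by (simp add: a_def b_def c_def power2_eq_square)
  qed
qed



lemma norm2_psd_bound:
  fixes M :: "real^'n^'n"
  assumes s: "transpose M = M" and p: "\<And>x. 0 \<le> x \<bullet> (M *v x)"
    and b: "\<And>x. x \<bullet> (M *v x) \<le> c * (x \<bullet> x)" and c0: "0 \<le> c"
  shows "norm2 M \<le> c"
  unfolding norm2_def
proof (rule onorm_le)
  fix x
  define y where "y = M *v x"
  have "(y \<bullet> y)^2 = (y \<bullet> (M *v x))^2" by (simp add: y_def)
  also have "\<dots> \<le> (y \<bullet> (M *v y)) * (x \<bullet> (M *v x))" by (rule psd_cs[OF s p])
  also have "\<dots> \<le> (c * (y \<bullet> y)) * (c * (x \<bullet> x))"
  proof (rule mult_mono)
    show "y \<bullet> (M *v y) \<le> c * (y \<bullet> y)" by (rule b)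
    show "x \<bullet> (M *v x) \<le> c * (x \<bullet> x)" by (rule b)
    show "0 \<le> c * (y \<bullet> y)" using c0 by simp
    show "0 \<le> x \<bullet> (M *v x)" by (rule p)
  qed
  also have "\<dots> = (c * c * (x \<bullet> x)) * (y \<bullet> y)" by (simp only: mult_ac)
  finally have h: "(y \<bullet> y)^2 \<le> (c * c * (x \<bullet> x)) * (y \<bullet> y)" .
  have yx: "y \<bullet> y \<le> c * c * (x \<bullet> x)"
  proof (cases "y \<bullet> y = 0")
    case True then show ?thesis using c0 by simp
  next
    case False
    then have yp: "y \<bullet> y > 0" by (simp add: order_le_neq_trans)
    have "(y \<bullet> y) * (y \<bullet> y) \<le> (c * c * (x \<bullet> x)) * (y \<bullet> y)" using h by (simp only: power2_eq_square)
    then show ?thesis using yp by (rule mult_right_le_imp_le)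
  qed
  have "(norm y)^2 \<le> (c * norm x)^2"
  proof -
    have "(norm y)^2 = y \<bullet> y" by (rule power2_norm_eq_inner)
    also have "\<dots> \<le> c * c * (x \<bullet> x)" by (rule yx)
    also have "\<dots> = (c * norm x)^2"
    proof -
      have nx: "x \<bullet> x = norm x * norm x" using power2_norm_eq_inner[of x] by (simp only: power2_eq_square)
      show ?thesis by (simp only: nx power2_eq_square mult_ac)
    qed
    finally show ?thesis .
  qed
  then have "norm y \<le> c * norm x" by (rule power2_le_imp_le) (use c0 in simp)
  then show "norm (M *v x) \<le> c * norm x" by (simp add: y_def)
qed


lemma norm2_inv_bound:
  fixes M :: "real^'n^'n"
  assumes i: "invertible M" and b: "\<And>x. m * (x \<bullet> x) \<le> x \<bullet> (M *v x)" and m0: "0 < m"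
  shows "norm2 (matrix_inv M) \<le> 1 / m"
  unfolding norm2_def
proof (rule onorm_le)
  fix y
  define x where "x = matrix_inv M *v y"
  have Mx: "M *v x = y" unfolding x_def by (rule mat_inv_vec(2)[OF i])
  have "m * (norm x * norm x) \<le> norm x * norm y"
    using b[of x] Mx Cauchy_Schwarz_ineq2[of x y] by (simp add: dot_square_norm power2_eq_square)
  then have "m * norm x \<le> norm y"
    by (cases "norm x = 0") (auto simp: mult.left_commute)
  then show "norm (matrix_inv M *v y) \<le> 1 / m * norm y"
    unfolding x_def[symmetric] using m0 by (simp add: field_simps)
qed




lemma sum_mvec:
  fixes f :: "nat \<Rightarrow> real^'n^'n"
  shows "(sum f S) *v x = (\<Sum>k\<in>S. f k *v x)"
proof (cases "finite S")
  case True then show ?thesis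
    by (induction S rule: finite_induct) (simp_all add: matrix_vector_mult_add_rdistrib)
next
  case False then show ?thesis by simp
qed

lemma transpose_add':
  fixes A B :: "real^'n^'n"
  shows "transpose (A + B) = transpose A + transpose B"
  by (simp add: transpose_def vec_eq_iff)
lemma transpose_sum:
  fixes f :: "nat \<Rightarrow> real^'n^'n"
  shows "transpose (sum f S) = (\<Sum>k\<in>S. transpose (f k))"
proof (cases "finite S")
  case True then show ?thesis
    by (induction S rule: finite_induct) (simp_all add: transpose_add', simp add: transpose_def vec_eq_iff)
next
  case False then show ?thesis by (simp add: transpose_def vec_eq_iff)
qed

lemma proj_bound:
  fixes A P :: "real^'n^'n"
  assumes A: "spd A" and P: "orth_proj P"
  shows "(P *v x) \<bullet> (P *v x) \<le> norm2 (P ** matrix_inv A ** P) * (x \<bullet> (A *v x))"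
proof -
  have sA: "transpose A = A" using spd_sym[OF A] .
  have iA: "invertible A" using spd_invertible[OF A] .
  have sP: "transpose P = P" and PP: "P ** P = P" using P by (auto simp: orth_proj_def)
  have sAi: "transpose (matrix_inv A) = matrix_inv A" using inv_sym[OF sA iA] .
  have psdA: "0 \<le> x \<bullet> (A *v x)" for x
  proof (cases "x = 0")
    case True then show ?thesis by simp
  next
    case False then show ?thesis using spd_pos[OF A, of x] by simp
  qed
  define N where "N = P ** matrix_inv A ** P"
  define c where "c = norm2 N"
  have c0: "0 \<le> c" unfolding c_def norm2_def by (rule onorm_pos_le[OF matrix_vector_mul_bounded_linear])
  define y where "y = P *v x"
  have Py: "P *v y = y" unfolding y_def by (simp add: matrix_vector_mul_assoc PP)
  have yy: "y \<bullet> y = x \<bullet> y"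
  proof -
    have "y \<bullet> y = (P *v x) \<bullet> y" by (simp add: y_def)
    also have "\<dots> = x \<bullet> (P *v y)" using sym_dot[OF sP, of x y] by simp
    finally show ?thesis using Py by simp
  qed
  define u where "u = matrix_inv A *v y"
  have Au: "A *v u = y" unfolding u_def by (rule mat_inv_vec(2)[OF iA])
  have cs: "(x \<bullet> (A *v u))^2 \<le> (x \<bullet> (A *v x)) * (u \<bullet> (A *v u))" by (rule psd_cs[OF sA psdA])
  have uu: "u \<bullet> (A *v u) \<le> c * (y \<bullet> y)"
  proof -
    have "u \<bullet> (A *v u) = y \<bullet> (matrix_inv A *v y)" using Au by (simp add: u_def inner_commute)
    also have "\<dots> = (P *v y) \<bullet> (matrix_inv A *v (P *v y))" using Py by simp
    also have "\<dots> = y \<bullet> (P *v (matrix_inv A *v (P *v y)))" using sym_dot[OF sP, of y] by simp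
    also have "\<dots> = y \<bullet> (N *v y)" by (simp add: N_def matrix_vector_mul_assoc matrix_mul_assoc)
    also have "\<dots> \<le> norm y * norm (N *v y)" by (rule norm_cauchy_schwarz)
    also have "\<dots> \<le> norm y * (c * norm y)"
      unfolding c_def norm2_def
      by (intro mult_left_mono onorm[OF matrix_vector_mul_bounded_linear]) simp
    also have "\<dots> = c * (y \<bullet> y)" by (simp add: dot_square_norm power2_eq_square)
    finally show ?thesis .
  qed
  have "(x \<bullet> (A *v x)) * (u \<bullet> (A *v u)) \<le> (x \<bullet> (A *v x)) * (c * (y \<bullet> y))"
    by (rule mult_left_mono[OF uu psdA])
  with cs have "(x \<bullet> (A *v u))^2 \<le> (x \<bullet> (A *v x)) * (c * (y \<bullet> y))" by (rule order_trans)
  moreover have "x \<bullet> (A *v u) = y \<bullet> y" using Au yy by simp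
  ultimately have "(y \<bullet> y)^2 \<le> (x \<bullet> (A *v x)) * (c * (y \<bullet> y))" by simp
  then have h: "(y \<bullet> y) * (y \<bullet> y) \<le> (c * (x \<bullet> (A *v x))) * (y \<bullet> y)"
    by (simp add: power2_eq_square algebra_simps)
  have "y \<bullet> y \<le> c * (x \<bullet> (A *v x))"
  proof (cases "y \<bullet> y = 0")
    case True then show ?thesis using c0 psdA[of x] by simp
  next
    case False
    then have "y \<bullet> y > 0" by (simp add: order_le_neq_trans)
    then show ?thesis using h by simp
  qed
  then show ?thesis by (simp add: y_def N_def c_def)
qed

lemma term_bound:
  fixes A P E :: "real^'n^'n"
  assumes A: "spd A" and P: "orth_proj P"
  shows "\<bar>x \<bullet> ((P ** E ** P) *v x)\<bar> \<le> norm2 E * norm2 (P ** matrix_inv A ** P) * (x \<bullet> (A *v x))"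
proof -
  have sP: "transpose P = P" using P by (auto simp: orth_proj_def)
  define y where "y = P *v x"
  have "x \<bullet> ((P ** E ** P) *v x) = x \<bullet> (P *v (E *v y))" by (simp add: y_def matrix_vector_mul_assoc matrix_mul_assoc)
  also have "\<dots> = y \<bullet> (E *v y)" using sym_dot[OF sP, of x] by (simp add: y_def)
  finally have e: "x \<bullet> ((P ** E ** P) *v x) = y \<bullet> (E *v y)" .
  have "\<bar>y \<bullet> (E *v y)\<bar> \<le> norm y * norm (E *v y)" by (rule Cauchy_Schwarz_ineq2)
  also have "\<dots> \<le> norm y * (norm2 E * norm y)"
    unfolding norm2_def
    by (intro mult_left_mono onorm[OF matrix_vector_mul_bounded_linear]) simp
  also have "\<dots> = norm2 E * (y \<bullet> y)" by (simp add: dot_square_norm power2_eq_square)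
  also have "\<dots> \<le> norm2 E * (norm2 (P ** matrix_inv A ** P) * (x \<bullet> (A *v x)))"
    unfolding y_def
    by (intro mult_left_mono proj_bound[OF A P]) (simp add: norm2_def onorm_pos_le[OF matrix_vector_mul_bounded_linear])
  finally show ?thesis using e by (simp add: mult.assoc)
qed




theorem mainTheorem3:
  fixes A :: "real^'n^'n" and E P :: "nat \<Rightarrow> real^'n^'n" and l :: nat and \<mu> :: real
  assumes "spd A"
    and "\<And>k. k \<in> {1..l} \<Longrightarrow> symmetric_matrix (E k)"
    and "\<And>k. k \<in> {1..l} \<Longrightarrow> orth_proj (P k)"
    and "(\<Sum>k=1..l. norm2 (E k) * norm2 (P k ** matrix_inv A ** P k)) \<le> \<mu>"
    and "\<mu> < 1"
  shows "spd (A + (\<Sum>k=1..l. P k ** E k ** P k))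
    \<and> cond2 (mat_inv_sqrt (A + (\<Sum>k=1..l. P k ** E k ** P k)) ** A
              ** mat_inv_sqrt (A + (\<Sum>k=1..l. P k ** E k ** P k)))
        \<le> (1 + \<mu>) / (1 - \<mu>)"
proof -
  note A = assms(1)
  have sA: "transpose A = A" using spd_sym[OF A] .
  have psdA: "0 \<le> x \<bullet> (A *v x)" for x
  proof (cases "x = 0")
    case True then show ?thesis by simp
  next
    case False then show ?thesis using spd_pos[OF A, of x] by simp
  qed
  have n2pos: "0 \<le> norm2 X" for X :: "real^'n^'n"
    unfolding norm2_def by (rule onorm_pos_le[OF matrix_vector_mul_bounded_linear])
  have mu0: "0 \<le> \<mu>"
  proof -
    have "0 \<le> (\<Sum>k=1..l. norm2 (E k) * norm2 (P k ** matrix_inv A ** P k))"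
      by (intro sum_nonneg mult_nonneg_nonneg n2pos)
    then show ?thesis using assms(4) by linarith
  qed
  define D where "D = (\<Sum>k=1..l. P k ** E k ** P k)"
  define B where "B = A + D"
  have Dbound: "\<bar>x \<bullet> (D *v x)\<bar> \<le> \<mu> * (x \<bullet> (A *v x))" for x
  proof -
    have "x \<bullet> (D *v x) = (\<Sum>k=1..l. x \<bullet> ((P k ** E k ** P k) *v x))"
      by (simp add: D_def sum_mvec inner_sum_right)
    then have "\<bar>x \<bullet> (D *v x)\<bar> \<le> (\<Sum>k=1..l. \<bar>x \<bullet> ((P k ** E k ** P k) *v x)\<bar>)"
      by (simp add: sum_abs)
    also have "\<dots> \<le> (\<Sum>k=1..l. norm2 (E k) * norm2 (P k ** matrix_inv A ** P k) * (x \<bullet> (A *v x)))"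
      by (intro sum_mono term_bound[OF A assms(3)]) simp
    also have "\<dots> = (\<Sum>k=1..l. norm2 (E k) * norm2 (P k ** matrix_inv A ** P k)) * (x \<bullet> (A *v x))"
      by (simp add: sum_distrib_right)
    also have "\<dots> \<le> \<mu> * (x \<bullet> (A *v x))"
      by (rule mult_right_mono[OF assms(4) psdA])
    finally show ?thesis .
  qed
  have Bx: "x \<bullet> (B *v x) = x \<bullet> (A *v x) + x \<bullet> (D *v x)" for x
    by (simp add: B_def matrix_vector_mult_add_rdistrib inner_add_right)
  have Blo: "(1 - \<mu>) * (x \<bullet> (A *v x)) \<le> x \<bullet> (B *v x)" for x
    using Dbound[of x] Bx[of x] by (simp add: algebra_simps abs_le_iff)
  have Bhi: "x \<bullet> (B *v x) \<le> (1 + \<mu>) * (x \<bullet> (A *v x))" for x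
    using Dbound[of x] Bx[of x] by (simp add: algebra_simps abs_le_iff)
  have sB: "transpose B = B"
  proof -
    have "transpose (P k ** E k ** P k) = P k ** E k ** P k" if "k \<in> {1..l}" for k
    proof -
      have "transpose (P k) = P k" using assms(3)[OF that] by (simp add: orth_proj_def)
      moreover have "transpose (E k) = E k" using assms(2)[OF that] by (simp add: symmetric_matrix_def)
      ultimately show ?thesis by (simp add: matrix_transpose_mul matrix_mul_assoc)
    qed
    then have "transpose D = D" unfolding D_def transpose_sum by (rule sum.cong[OF refl])
    then show ?thesis using sA by (simp add: B_def transpose_add')
  qed
  have spdB: "spd B"
    unfolding spd_def symmetric_matrix_def
  proof (intro conjI allI impI sB)
    fix x :: "real^'n" assume "x \<noteq> 0"
    then have "0 < x \<bullet> (A *v x)" by (rule spd_pos[OF A])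
    then have "0 < (1 - \<mu>) * (x \<bullet> (A *v x))" using assms(5) by simp
    then show "0 < x \<bullet> (B *v x)" using Blo[of x] by linarith
  qed
  define S where "S = mat_sqrt B"
  have S: "spd S" "S ** S = B" using mat_sqrt[OF spdB] by (auto simp: S_def)
  have sS: "transpose S = S" using spd_sym[OF S(1)] .
  have iS: "invertible S" using spd_invertible[OF S(1)] .
  define Si where "Si = matrix_inv S"
  have sSi: "transpose Si = Si" unfolding Si_def by (rule inv_sym[OF sS iS])
  have iSi: "invertible Si"
    using mat_inv_props[OF iS] unfolding Si_def invertible_right_inverse by blast
  have SSi: "S *v (Si *v x) = x" for x unfolding Si_def by (rule mat_inv_vec(2)[OF iS])
  define M where "M = Si ** A ** Si"
  have Mx: "x \<bullet> (M *v x) = (Si *v x) \<bullet> (A *v (Si *v x))" for x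
  proof -
    have "x \<bullet> (M *v x) = x \<bullet> (Si *v (A *v (Si *v x)))"
      by (simp add: M_def matrix_vector_mul_assoc matrix_mul_assoc)
    also have "\<dots> = (Si *v x) \<bullet> (A *v (Si *v x))" by (rule sym_dot[OF sSi])
    finally show ?thesis .
  qed
  have zB: "(Si *v x) \<bullet> (B *v (Si *v x)) = x \<bullet> x" for x
  proof -
    have "(Si *v x) \<bullet> (B *v (Si *v x)) = (Si *v x) \<bullet> (S *v (S *v (Si *v x)))"
      by (simp add: S(2)[symmetric] matrix_vector_mul_assoc matrix_mul_assoc)
    also have "\<dots> = (S *v (Si *v x)) \<bullet> (S *v (Si *v x))" by (rule sym_dot[OF sS])
    also have "\<dots> = x \<bullet> x" by (simp add: SSi)
    finally show ?thesis .
  qed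
  have Mup: "x \<bullet> (M *v x) \<le> (1 / (1 - \<mu>)) * (x \<bullet> x)" for x
  proof -
    have "(1 - \<mu>) * (x \<bullet> (M *v x)) \<le> x \<bullet> x" using Blo[of "Si *v x"] zB[of x] Mx[of x] by simp
    then show ?thesis using assms(5) by (simp add: field_simps mult.commute)
  qed
  have Mlo: "(1 / (1 + \<mu>)) * (x \<bullet> x) \<le> x \<bullet> (M *v x)" for x
  proof -
    have "x \<bullet> x \<le> (1 + \<mu>) * (x \<bullet> (M *v x))" using Bhi[of "Si *v x"] zB[of x] Mx[of x] by simp
    then show ?thesis using mu0 by (simp add: field_simps mult.commute)
  qed
  have psdM: "0 \<le> x \<bullet> (M *v x)" for x using Mx[of x] psdA by simp
  have sM: "transpose M = M" using sSi sA by (simp add: M_def matrix_transpose_mul matrix_mul_assoc)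
  have iM: "invertible M" unfolding M_def
    by (intro invertible_mult iSi spd_invertible[OF A])
  have n1: "norm2 M \<le> 1 / (1 - \<mu>)"
    by (rule norm2_psd_bound[OF sM psdM Mup]) (use assms(5) in simp)
  have n2: "norm2 (matrix_inv M) \<le> 1 + \<mu>"
    using norm2_inv_bound[OF iM Mlo] mu0 by simp
  have "cond2 M \<le> (1 / (1 - \<mu>)) * (1 + \<mu>)"
    unfolding cond2_def by (rule mult_mono[OF n1 n2 _ n2pos]) (use assms(5) in simp)
  also have "\<dots> = (1 + \<mu>) / (1 - \<mu>)" by simp
  finally have "cond2 M \<le> (1 + \<mu>) / (1 - \<mu>)" .
  moreover have "mat_inv_sqrt B = Si" by (simp add: mat_inv_sqrt_def Si_def S_def)
  ultimately show ?thesis using spdB unfolding M_def B_def D_def by simp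
qed


end
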